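(* Let $f$ be a stable update function. Suppose the configuration $\mathcal U^{(t)}=(\vec u_1^{(t)},\dots,\vec u_n^{(t)})$ is strictly convex with coefficients $b_1,\dots,b_n\in\{-1,1\}$, i.e. $\langle b_i\vec u_i^{(t)},b_j\vec u_j^{(t)}\rangle>0$ for all $i,j\in[n]$, and let $\mathcal U^{(t+1)}$ be obtained from $\mathcal U^{(t)}$ by a single interaction. Then $\langle b_i\vec u_i^{(t+1)},b_j\vec u_j^{(t+1)}\rangle>0$ for all $i,j\in[n]$; in particular $\mathcal U^{(t+1)}$ is strictly convex with the same coefficients.
   Context: Opinions are unit vectors in $\mathbb R^d$; a configuration is an $n$-tuple, $A_{ij}=\langle\vec u_i,\vec u_j\rangle$. An interaction $(i,j)$, $i\ne j$, replaces $\vec u_i$ by $\vec w/\|\vec w\|$ with $\vec w=\vec u_i+f(A_{ij})\vec u_j$, leaving other opinions unchanged. $f:[-1,1]\to\mathbb R$ is stable if continuous and $\operatorname{sign}f(A)=\operatorname{sign}A$ for all $A$. A configuration is strictly convex if there exist $b_1,\dots,b_n\in\{\pm1\}$ with $\langle b_i\vec u_i,b_j\vec u_j\rangle>0$ for all $i,j$. *)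

theory Defs
  imports "HOL-Analysis.Analysis"
begin

text \<open>Opinions are vectors in a Euclidean space 'a (playing the role of R^d);
a configuration of n opinions is a function u :: nat => 'a, relevant on indices i < n.\<close>

definition unit_config :: "nat \<Rightarrow> (nat \<Rightarrow> 'a::euclidean_space) \<Rightarrow> bool" where
  "unit_config n u \<longleftrightarrow> (\<forall>i<n. norm (u i) = 1)"

definition stable :: "(real \<Rightarrow> real) \<Rightarrow> bool" where
  "stable f \<longleftrightarrow> continuous_on {-1..1} f \<and> (\<forall>A\<in>{-1..1}. sgn (f A) = sgn A)"

definition interact :: "(real \<Rightarrow> real) \<Rightarrow> (nat \<Rightarrow> 'a::euclidean_space) \<Rightarrow> nat \<Rightarrow> nat \<Rightarrow> (nat \<Rightarrow> 'a)" where
  "interact f u i j = (let w = u i + f (u i \<bullet> u j) *\<^sub>R u j in u(i := (1 / norm w) *\<^sub>R w))"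

definition strictly_convex_with :: "nat \<Rightarrow> (nat \<Rightarrow> 'a::euclidean_space) \<Rightarrow> (nat \<Rightarrow> real) \<Rightarrow> bool" where
  "strictly_convex_with n u b \<longleftrightarrow>
     (\<forall>i<n. b i \<in> {-1, 1}) \<and> (\<forall>i<n. \<forall>j<n. (b i *\<^sub>R u i) \<bullet> (b j *\<^sub>R u j) > 0)"

definition strictly_convex :: "nat \<Rightarrow> (nat \<Rightarrow> 'a::euclidean_space) \<Rightarrow> bool" where
  "strictly_convex n u \<longleftrightarrow> (\<exists>b. strictly_convex_with n u b)"

end

theory Submission
  imports Defs
begin

theorem mainTheorem16:
  fixes f :: "real \<Rightarrow> real" and u :: "nat \<Rightarrow> 'a::euclidean_space" and b :: "nat \<Rightarrow> real"
    and n i j :: nat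
  assumes "stable f"
    and "unit_config n u"
    and "\<forall>k<n. b k \<in> {-1, 1}"
    and "\<forall>k<n. \<forall>l<n. (b k *\<^sub>R u k) \<bullet> (b l *\<^sub>R u l) > 0"
    and "i < n" and "j < n" and "i \<noteq> j"
  shows "(\<forall>k<n. \<forall>l<n. (b k *\<^sub>R interact f u i j k) \<bullet> (b l *\<^sub>R interact f u i j l) > 0)
         \<and> strictly_convex_with n (interact f u i j) b"
proof -
  note pos = assms(4)
  define v where "v k = b k *\<^sub>R u k" for k
  define A where "A = u i \<bullet> u j"
  define w where "w = u i + f A *\<^sub>R u j"
  have bi: "b i \<in> {-1,1}" and bj: "b j \<in> {-1,1}" using assms(3,5,6) by auto
  have ni: "norm (u i) = 1" and nj: "norm (u j) = 1" using assms(2,5,6) unfolding unit_config_def by auto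
  have Ain: "A \<in> {-1..1}"
    using Cauchy_Schwarz_ineq2[of "u i" "u j"] ni nj unfolding A_def by auto
  have vij: "b i * b j * A > 0"
  proof -
    have "(b i *\<^sub>R u i) \<bullet> (b j *\<^sub>R u j) > 0" using pos assms(5,6) by blast
    then show ?thesis unfolding A_def by (simp add: algebra_simps)
  qed
  have sg: "sgn (f A) = sgn A" using assms(1) Ain unfolding stable_def by auto
  define c where "c = f A * b i * b j"
  have cpos: "c > 0"
  proof -
    have "sgn (f A) = sgn (b i * b j)"
      using sg vij bi bj by (auto simp: sgn_if split: if_splits)
    then show ?thesis using bi bj unfolding c_def by (auto simp: sgn_if split: if_splits)
  qed
  have bw: "b i *\<^sub>R w = v i + c *\<^sub>R v j"
  proof -
    have "b j * b j = 1" using bj by auto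
    then have "b i *\<^sub>R f A *\<^sub>R u j = c *\<^sub>R v j"
      unfolding c_def v_def by (simp add: algebra_simps)
    then show ?thesis unfolding w_def v_def by (simp add: scaleR_add_right)
  qed
  have key: "(b i *\<^sub>R w) \<bullet> v k > 0" if "k < n" for k
  proof -
    have "v i \<bullet> v k > 0" "v j \<bullet> v k > 0" using pos that assms(5,6) unfolding v_def by auto
    then show ?thesis using cpos unfolding bw by (simp add: inner_add_left add_pos_pos)
  qed
  have wnz: "b i *\<^sub>R w \<noteq> 0" using key[OF assms(5)] by auto
  have nw: "norm w > 0" using wnz by auto
  have new: "interact f u i j = u(i := (1 / norm w) *\<^sub>R w)"
    unfolding interact_def w_def A_def Let_def by simp
  have bnew: "b i *\<^sub>R interact f u i j i = (1 / norm w) *\<^sub>R (b i *\<^sub>R w)"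
    unfolding new by simp
  have other: "b k *\<^sub>R interact f u i j k = v k" if "k \<noteq> i" for k
    unfolding new v_def using that by simp
  have all: "\<forall>k<n. \<forall>l<n. (b k *\<^sub>R interact f u i j k) \<bullet> (b l *\<^sub>R interact f u i j l) > 0"
  proof (intro allI impI)
    fix k l assume k: "k < n" and l: "l < n"
    show "(b k *\<^sub>R interact f u i j k) \<bullet> (b l *\<^sub>R interact f u i j l) > 0"
    proof (cases "k = i")
      case True
      show ?thesis
      proof (cases "l = i")
        case True
        have "(b i *\<^sub>R interact f u i j i) \<bullet> (b i *\<^sub>R interact f u i j i) > 0"
        proof -
          have "(1 / norm w) *\<^sub>R (b i *\<^sub>R w) \<noteq> 0" using wnz nw by simp
          then show ?thesis unfolding bnew by (rule inner_gt_zero_iff[THEN iffD2])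
        qed
        then show ?thesis using True \<open>k = i\<close> by simp
      next
        case False
        then show ?thesis using \<open>k = i\<close> bnew other key[OF l] nw by simp
      qed
    next
      case False
      show ?thesis
      proof (cases "l = i")
        case True
        then show ?thesis using False bnew other key[OF k] nw by (simp add: inner_commute)
      next
        case lF: False
        have "v k \<bullet> v l > 0" using pos k l unfolding v_def by blast
        then show ?thesis using other[OF False] other[OF lF] by simp
      qed
    qed
  qed
  show ?thesis using all assms(3) unfolding strictly_convex_with_def by blast
qed

end
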